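(* Let $T\in U(n,1)$ be unipotent (parabolic) and $S\in U(n,1)$ elliptic. Then $ST=TS$ if and only if $T(\mathrm{fix}(S))=\mathrm{fix}(S)$ and $S(\mathrm{fix}(T))=\mathrm{fix}(T)$.
   Context: $U(n,1)$ is the unitary group of a Hermitian form of signature $(n,1)$ on $\mathbb{C}^{n+1}$; it acts on complex hyperbolic space $H^n_{\mathbb{C}}$ (projectivized negative vectors) and its closure $\overline{H^n_{\mathbb{C}}}$ (adding projectivized null vectors). For $g\in U(n,1)$, $\mathrm{fix}(g)$ is the set of points of $\overline{H^n_{\mathbb{C}}}$ fixed by $g$. An element is elliptic if it fixes a point of $H^n_{\mathbb{C}}$. *)

theory Defs
  imports "Jordan_Normal_Form.Matrix"
begin

definition hform :: "nat \<Rightarrow> complex vec \<Rightarrow> complex vec \<Rightarrow> complex" where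
  "hform n z w = (\<Sum>i<n. z $ i * cnj (w $ i)) - z $ n * cnj (w $ n)"

definition Unk1 :: "nat \<Rightarrow> complex mat set" where
  "Unk1 n = {g \<in> carrier_mat (n+1) (n+1).
     \<forall>z \<in> carrier_vec (n+1). \<forall>w \<in> carrier_vec (n+1). hform n (g *\<^sub>v z) (g *\<^sub>v w) = hform n z w}"

text \<open>Projective point spanned by a nonzero vector (the complex line minus 0).\<close>
definition proj_pt :: "complex vec \<Rightarrow> complex vec set" where
  "proj_pt z = {c \<cdot>\<^sub>v z | c. c \<noteq> 0}"

definition chyp :: "nat \<Rightarrow> complex vec set set" where
  "chyp n = {proj_pt z | z. z \<in> carrier_vec (n+1) \<and> Re (hform n z z) < 0}"

definition chyp_bd :: "nat \<Rightarrow> complex vec set set" where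
  "chyp_bd n = {proj_pt z | z. z \<in> carrier_vec (n+1) \<and> z \<noteq> 0\<^sub>v (n+1) \<and> hform n z z = 0}"

definition chyp_cl :: "nat \<Rightarrow> complex vec set set" where
  "chyp_cl n = chyp n \<union> chyp_bd n"

definition pact :: "complex mat \<Rightarrow> complex vec set \<Rightarrow> complex vec set" where
  "pact g p = (\<lambda>z. g *\<^sub>v z) ` p"

definition fixset :: "nat \<Rightarrow> complex mat \<Rightarrow> complex vec set set" where
  "fixset n g = {p \<in> chyp_cl n. pact g p = p}"

definition elliptic :: "nat \<Rightarrow> complex mat \<Rightarrow> bool" where
  "elliptic n g \<longleftrightarrow> g \<in> Unk1 n \<and> (\<exists>p \<in> chyp n. pact g p = p)"

definition parabolic :: "nat \<Rightarrow> complex mat \<Rightarrow> bool" where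
  "parabolic n g \<longleftrightarrow> g \<in> Unk1 n \<and> (\<exists>p \<in> chyp_bd n. fixset n g = {p})"

definition unipotent :: "nat \<Rightarrow> complex mat \<Rightarrow> bool" where
  "unipotent n g \<longleftrightarrow> g \<in> carrier_mat (n+1) (n+1) \<and>
     (\<exists>k. (g - 1\<^sub>m (n+1)) ^\<^sub>m k = 0\<^sub>m (n+1) (n+1))"

end

theory Submission imports Defs "Jordan_Normal_Form.Determinant" begin

lemma cmc: "z * cnj z = complex_of_real ((cmod z)^2)"
  by (simp add: complex_mult_cnj cmod_power2)

lemma hf_add1: assumes "z \<in> carrier_vec (n+1)" "w \<in> carrier_vec (n+1)"
  shows "hform n (z + w) u = hform n z u + hform n w u"
proof -
  have "(\<Sum>i<n. (z+w) $ i * cnj (u $ i)) = (\<Sum>i<n. z $ i * cnj (u $ i)) + (\<Sum>i<n. w $ i * cnj (u $ i))"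
    unfolding sum.distrib[symmetric] by (rule sum.cong) (use assms in \<open>auto simp: algebra_simps\<close>)
  then show ?thesis using assms unfolding hform_def by (simp add: algebra_simps)
qed

lemma hf_smult1: assumes "z \<in> carrier_vec (n+1)" shows "hform n (c \<cdot>\<^sub>v z) u = c * hform n z u"
proof -
  have "(\<Sum>i<n. (c \<cdot>\<^sub>v z) $ i * cnj (u $ i)) = c * (\<Sum>i<n. z $ i * cnj (u $ i))"
    unfolding sum_distrib_left by (rule sum.cong) (use assms in \<open>auto simp: algebra_simps\<close>)
  then show ?thesis using assms unfolding hform_def by (simp add: algebra_simps)
qed

lemma hf_cnj: "hform n w z = cnj (hform n z w)"
  unfolding hform_def by (simp add: algebra_simps)

lemma hf_add2: assumes "z \<in> carrier_vec (n+1)" "w \<in> carrier_vec (n+1)"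
  shows "hform n u (z + w) = hform n u z + hform n u w"
  by (metis hf_cnj hf_add1[OF assms] complex_cnj_add)

lemma hf_smult2: assumes "z \<in> carrier_vec (n+1)" shows "hform n u (c \<cdot>\<^sub>v z) = cnj c * hform n u z"
  by (metis hf_cnj hf_smult1[OF assms] complex_cnj_mult)

lemma hf_minus1: assumes "z \<in> carrier_vec (n+1)" "w \<in> carrier_vec (n+1)"
  shows "hform n (z - w) u = hform n z u - hform n w u"
proof -
  have "z - w = z + (-1) \<cdot>\<^sub>v w" using assms by (intro eq_vecI) auto
  then show ?thesis using assms hf_add1[of z n "(-1) \<cdot>\<^sub>v w"] hf_smult1[of w n "-1"] by simp
qed

lemma hf_minus2: assumes "z \<in> carrier_vec (n+1)" "w \<in> carrier_vec (n+1)"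
  shows "hform n u (z - w) = hform n u z - hform n u w"
  by (metis hf_cnj hf_minus1[OF assms] complex_cnj_diff)

lemma hf_zero1: "hform n (0\<^sub>v (n+1)) u = 0"
  unfolding hform_def by simp

lemma hf_self: "hform n v v = complex_of_real ((\<Sum>i<n. (cmod (v$i))^2) - (cmod (v$n))^2)"
  unfolding hform_def by (simp add: cmc)

lemma hf_self_real: "Im (hform n v v) = 0"
  unfolding hf_self by simp

lemma per_i: "(cmod (X * v - V * x))^2 = (cmod X)^2 * (cmod v)^2 - 2 * Re (X * cnj V * (v * cnj x)) + (cmod V)^2 * (cmod x)^2"
  by (simp only: cmod_power2) (simp add: power2_eq_square algebra_simps)

lemma defin: assumes x: "x \<in> carrier_vec (n+1)" and v: "v \<in> carrier_vec (n+1)"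
  and xneg: "Re (hform n x x) < 0" and orth: "hform n v x = 0" and vn: "Re (hform n v v) \<le> 0"
  shows "v = 0\<^sub>v (n+1)"
proof -
  define a where "a = (\<Sum>i<n. (cmod (x$i))^2)"
  define b where "b = (\<Sum>i<n. (cmod (v$i))^2)"
  define X where "X = x$n"
  define V where "V = v$n"
  have ha: "a < (cmod X)^2" using xneg unfolding hf_self a_def X_def by simp
  have hb: "b \<le> (cmod V)^2" using vn unfolding hf_self b_def V_def by simp
  have S1: "(\<Sum>i<n. v$i * cnj (x$i)) = V * cnj X" using orth unfolding hform_def V_def X_def by simp
  have V0: "V = 0"
  proof (rule ccontr)
    assume "V \<noteq> 0"
    hence Vp: "(cmod V)^2 > 0" by simp
    have "0 \<le> (\<Sum>i<n. (cmod (X * v$i - V * x$i))^2)" by (intro sum_nonneg) auto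
    also have "\<dots> = (cmod X)^2 * b - 2 * Re (X * cnj V * (\<Sum>i<n. v$i * cnj (x$i))) + (cmod V)^2 * a"
      unfolding per_i a_def b_def by (simp add: sum.distrib sum_subtractf sum_distrib_left sum_distrib_right Re_sum[symmetric] algebra_simps)
    also have "X * cnj V * (\<Sum>i<n. v$i * cnj (x$i)) = complex_of_real ((cmod X)^2 * (cmod V)^2)"
    proof -
      have "X * cnj V * (V * cnj X) = (X * cnj X) * (V * cnj V)" by (simp add: algebra_simps)
      then show ?thesis unfolding S1 cmc by simp
    qed
    finally have "0 \<le> (cmod X)^2 * b - 2 * ((cmod X)^2 * (cmod V)^2) + (cmod V)^2 * a" by simp
    moreover have "(cmod X)^2 * b \<le> (cmod X)^2 * (cmod V)^2" using hb by (simp add: mult_left_mono)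
    moreover have "(cmod V)^2 * a < (cmod V)^2 * (cmod X)^2" using ha Vp by simp
    ultimately show False by (simp add: algebra_simps)
  qed
  have "b \<le> 0" using hb V0 by simp
  hence "\<forall>i\<in>{..<n}. (cmod (v$i))^2 = 0" unfolding b_def
    by (subst sum_nonneg_eq_0_iff[symmetric]) (use \<open>b \<le> 0\<close> in \<open>auto intro!: antisym sum_nonneg simp: b_def\<close>)
  then show ?thesis using v V0 unfolding V_def by (intro eq_vecI) (auto simp: less_Suc_eq)
qed


lemma hf_unit: assumes "z \<in> carrier_vec (n+1)" "i \<le> n"
  shows "hform n z (unit_vec (n+1) i) = (if i < n then z$i else - z$n)"
proof -
  have "(\<Sum>k<n. z $ k * cnj (unit_vec (n+1) i $ k)) = (\<Sum>k<n. if k = i then z$i else 0)"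
    by (rule sum.cong) (use assms in auto)
  then show ?thesis using assms unfolding hform_def by auto
qed

lemma Unk1_carrier: "g \<in> Unk1 n \<Longrightarrow> g \<in> carrier_mat (n+1) (n+1)"
  unfolding Unk1_def by auto

lemma Unk1_pres: "g \<in> Unk1 n \<Longrightarrow> z \<in> carrier_vec (n+1) \<Longrightarrow> w \<in> carrier_vec (n+1) \<Longrightarrow>
   hform n (g *\<^sub>v z) (g *\<^sub>v w) = hform n z w"
  unfolding Unk1_def by auto

lemma Unk1_inj: assumes g: "g \<in> Unk1 n" and z: "z \<in> carrier_vec (n+1)" and gz: "g *\<^sub>v z = 0\<^sub>v (n+1)"
  shows "z = 0\<^sub>v (n+1)"
proof (rule eq_vecI)
  fix i assume "i < dim_vec (0\<^sub>v (n+1) :: complex vec)"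
  hence i: "i \<le> n" by simp
  have "hform n z (unit_vec (n+1) i) = hform n (g *\<^sub>v z) (g *\<^sub>v unit_vec (n+1) i)"
    using Unk1_pres[OF g z, of "unit_vec (n+1) i"] by simp
  also have "\<dots> = 0" unfolding gz hf_zero1 ..
  finally show "z $ i = 0\<^sub>v (n+1) $ i" using hf_unit[OF z i] i by (auto split: if_splits)
qed (use z in auto)

lemma Unk1_inv: assumes g: "g \<in> Unk1 n"
  shows "\<exists>h \<in> Unk1 n. g * h = 1\<^sub>m (n+1) \<and> h * g = 1\<^sub>m (n+1)"
proof -
  have gc: "g \<in> carrier_mat (n+1) (n+1)" using Unk1_carrier[OF g] .
  have "det g \<noteq> 0"
    using Unk1_inj[OF g] by (subst det_0_iff_vec_prod_zero[OF gc]) auto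
  from det_non_zero_imp_unit[OF gc this, of undefined]
  obtain h where hc: "h \<in> carrier_mat (n+1) (n+1)" and u: "h * g = 1\<^sub>m (n+1)" "g * h = 1\<^sub>m (n+1)"
    unfolding Units_def ring_mat_def by auto
  have "h \<in> Unk1 n" unfolding Unk1_def
  proof (safe intro!: hc)
    fix z w :: "complex vec" assume z: "z \<in> carrier_vec (n+1)" and w: "w \<in> carrier_vec (n+1)"
    have "hform n (h *\<^sub>v z) (h *\<^sub>v w) = hform n (g *\<^sub>v (h *\<^sub>v z)) (g *\<^sub>v (h *\<^sub>v w))"
      using Unk1_pres[OF g, of "h *\<^sub>v z" "h *\<^sub>v w"] hc z w by simp
    also have "g *\<^sub>v (h *\<^sub>v z) = z" using assoc_mult_mat_vec[OF gc hc z, symmetric] u z by simp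
    also have "g *\<^sub>v (h *\<^sub>v w) = w" using assoc_mult_mat_vec[OF gc hc w, symmetric] u w by simp
    finally show "hform n (h *\<^sub>v z) (h *\<^sub>v w) = hform n z w" .
  qed
  then show ?thesis using u by auto
qed

lemma proj_mem: "z \<in> proj_pt z"
  unfolding proj_pt_def by (auto intro!: exI[of _ 1])

lemma pact_proj: assumes "g \<in> carrier_mat (n+1) (n+1)" "z \<in> carrier_vec (n+1)"
  shows "pact g (proj_pt z) = proj_pt (g *\<^sub>v z)"
proof -
  have "pact g (proj_pt z) = {g *\<^sub>v (c \<cdot>\<^sub>v z) | c. c \<noteq> 0}" unfolding pact_def proj_pt_def by auto
  also have "\<dots> = proj_pt (g *\<^sub>v z)" unfolding proj_pt_def using mult_mat_vec[OF assms] by auto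
  finally show ?thesis .
qed

lemma proj_smult: assumes "(c::complex) \<noteq> 0" shows "proj_pt (c \<cdot>\<^sub>v z) = proj_pt z"
proof -
  have "proj_pt (c \<cdot>\<^sub>v z) \<subseteq> proj_pt z" unfolding proj_pt_def using assms
    by (auto simp: smult_smult_assoc)
  moreover have "proj_pt z \<subseteq> proj_pt (c \<cdot>\<^sub>v z)" unfolding proj_pt_def
  proof safe
    fix d :: complex assume "d \<noteq> 0"
    then show "\<exists>e. d \<cdot>\<^sub>v z = e \<cdot>\<^sub>v (c \<cdot>\<^sub>v z) \<and> e \<noteq> 0" using assms
      by (intro exI[of _ "d / c"]) (auto simp: smult_smult_assoc)
  qed
  ultimately show ?thesis by blast
qed

lemma fixed_eig: assumes "g \<in> carrier_mat (n+1) (n+1)" "y \<in> carrier_vec (n+1)"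
  and "pact g (proj_pt y) = proj_pt y"
  shows "\<exists>\<mu>. g *\<^sub>v y = \<mu> \<cdot>\<^sub>v y"
proof -
  have "g *\<^sub>v y \<in> proj_pt y" using assms pact_proj[OF assms(1,2)] proj_mem[of "g *\<^sub>v y"] by simp
  then show ?thesis unfolding proj_pt_def by auto
qed

lemma eig_fixed: assumes "g \<in> carrier_mat (n+1) (n+1)" "y \<in> carrier_vec (n+1)"
  and "g *\<^sub>v y = \<mu> \<cdot>\<^sub>v y" "\<mu> \<noteq> 0"
  shows "pact g (proj_pt y) = proj_pt y"
  using pact_proj[OF assms(1,2)] assms(3) proj_smult[OF assms(4)] by simp

lemma chyp_cl_form: "p \<in> chyp_cl n \<Longrightarrow> \<exists>z. p = proj_pt z \<and> z \<in> carrier_vec (n+1) \<and>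
   (Re (hform n z z) < 0 \<or> (z \<noteq> 0\<^sub>v (n+1) \<and> hform n z z = 0))"
  unfolding chyp_cl_def chyp_def chyp_bd_def by auto

lemma Unk1_pact_cl: assumes g: "g \<in> Unk1 n" and p: "p \<in> chyp_cl n"
  shows "pact g p \<in> chyp_cl n"
proof -
  obtain z where z: "p = proj_pt z" "z \<in> carrier_vec (n+1)"
    and h: "Re (hform n z z) < 0 \<or> (z \<noteq> 0\<^sub>v (n+1) \<and> hform n z z = 0)"
    using chyp_cl_form[OF p] by blast
  have gc: "g \<in> carrier_mat (n+1) (n+1)" using Unk1_carrier[OF g] .
  have e: "pact g p = proj_pt (g *\<^sub>v z)" using pact_proj[OF gc z(2)] z by simp
  have hh: "hform n (g *\<^sub>v z) (g *\<^sub>v z) = hform n z z" using Unk1_pres[OF g z(2) z(2)] .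
  have nz: "z \<noteq> 0\<^sub>v (n+1) \<Longrightarrow> g *\<^sub>v z \<noteq> 0\<^sub>v (n+1)" using Unk1_inj[OF g z(2)] by blast
  have "g *\<^sub>v z \<in> carrier_vec (n+1)" using gc z by simp
  then show ?thesis using h hh nz e unfolding chyp_cl_def chyp_def chyp_bd_def by auto
qed

lemma fwd_sub: assumes A: "A \<in> Unk1 n" and B: "B \<in> carrier_mat (n+1) (n+1)" and AB: "A * B = B * A"
  and p: "p \<in> fixset n B" shows "pact A p \<in> fixset n B"
proof -
  have pc: "p \<in> chyp_cl n" and pf: "pact B p = p" using p unfolding fixset_def by auto
  obtain z where z: "p = proj_pt z" "z \<in> carrier_vec (n+1)" using chyp_cl_form[OF pc] by blast
  have Ac: "A \<in> carrier_mat (n+1) (n+1)" using Unk1_carrier[OF A] .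
  have "pact B (pact A p) = proj_pt (B *\<^sub>v (A *\<^sub>v z))" using z Ac B by (simp add: pact_proj)
  also have "B *\<^sub>v (A *\<^sub>v z) = A *\<^sub>v (B *\<^sub>v z)"
    using assoc_mult_mat_vec[OF B Ac z(2)] assoc_mult_mat_vec[OF Ac B z(2)] AB by simp
  also have "proj_pt \<dots> = pact A (pact B p)" using z Ac B by (simp add: pact_proj)
  finally have "pact B (pact A p) = pact A p" using pf by simp
  then show ?thesis using Unk1_pact_cl[OF A pc] unfolding fixset_def by auto
qed

lemma fwd: assumes A: "A \<in> Unk1 n" and B: "B \<in> carrier_mat (n+1) (n+1)" and AB: "A * B = B * A"
  shows "pact A ` fixset n B = fixset n B"
proof
  show "pact A ` fixset n B \<subseteq> fixset n B" using fwd_sub[OF A B AB] by blast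
  obtain H where H: "H \<in> Unk1 n" "A * H = 1\<^sub>m (n+1)" "H * A = 1\<^sub>m (n+1)" using Unk1_inv[OF A] by blast
  have Ac: "A \<in> carrier_mat (n+1) (n+1)" using Unk1_carrier[OF A] .
  have Hc: "H \<in> carrier_mat (n+1) (n+1)" using Unk1_carrier[OF H(1)] .
  have HB: "H * B = B * H"
  proof -
    have HBc: "H * B \<in> carrier_mat (n+1) (n+1)" using Hc B by simp
    have HAc: "H * A \<in> carrier_mat (n+1) (n+1)" using Hc Ac by simp
    have "H * B = H * B * (A * H)" using H Hc B by simp
    also have "\<dots> = H * B * A * H"
      using assoc_mult_mat[OF HBc Ac Hc] by simp
    also have "H * B * A = H * (B * A)"
      using assoc_mult_mat[OF Hc B Ac] by simp
    also have "B * A = A * B" using AB by simp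
    also have "H * (A * B) = (H * A) * B"
      using assoc_mult_mat[OF Hc Ac B] by simp
    also have "(H * A) * B * H = B * H" using H B Hc by simp
    finally show ?thesis .
  qed
  show "fixset n B \<subseteq> pact A ` fixset n B"
  proof
    fix p assume p: "p \<in> fixset n B"
    have q: "pact H p \<in> fixset n B" using fwd_sub[OF H(1) B HB p] .
    have pc: "p \<in> chyp_cl n" using p unfolding fixset_def by auto
    obtain z where z: "p = proj_pt z" "z \<in> carrier_vec (n+1)" using chyp_cl_form[OF pc] by blast
    have "pact A (pact H p) = proj_pt (A *\<^sub>v (H *\<^sub>v z))" using z Ac Hc by (simp add: pact_proj)
    also have "A *\<^sub>v (H *\<^sub>v z) = z" using assoc_mult_mat_vec[OF Ac Hc z(2), symmetric] H z by simp
    finally show "p \<in> pact A ` fixset n B" using q z by force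
  qed
qed


lemma mat_eq_vecI: assumes A: "(A :: complex mat) \<in> carrier_mat m m" and B: "B \<in> carrier_mat m m"
  and eq: "\<And>v. v \<in> carrier_vec m \<Longrightarrow> A *\<^sub>v v = B *\<^sub>v v"
  shows "A = B"
proof (rule eq_matI)
  fix i j assume i: "i < dim_row B" and j: "j < dim_col B"
  have "\<And>C :: complex mat. C \<in> carrier_mat m m \<Longrightarrow> C $$ (i,j) = (C *\<^sub>v unit_vec m j) $ i"
  proof -
    fix C :: "complex mat" assume C: "C \<in> carrier_mat m m"
    have "C $$ (i,j) = col (C * 1\<^sub>m m) j $ i" using C i j B by simp
    also have "\<dots> = (C *\<^sub>v unit_vec m j) $ i" using C j B by (subst col_mult2) auto
    finally show "C $$ (i,j) = (C *\<^sub>v unit_vec m j) $ i" .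
  qed
  then show "A $$ (i,j) = B $$ (i,j)" using A B eq[of "unit_vec m j"] by simp
qed (use A B in auto)

lemma mat_lin: assumes g: "(g::complex mat) \<in> carrier_mat m m" and u: "u \<in> carrier_vec m" and w: "w \<in> carrier_vec m"
  shows "g *\<^sub>v (a \<cdot>\<^sub>v u + b \<cdot>\<^sub>v w) = a \<cdot>\<^sub>v (g *\<^sub>v u) + b \<cdot>\<^sub>v (g *\<^sub>v w)"
  using mult_add_distrib_mat_vec[OF g, of "a \<cdot>\<^sub>v u" "b \<cdot>\<^sub>v w"] mult_mat_vec[OF g u] mult_mat_vec[OF g w] u w
  by simp

lemma eig_comb: assumes g: "(g::complex mat) \<in> carrier_mat m m" and u: "u \<in> carrier_vec m" and w: "w \<in> carrier_vec m"
  and gu: "g *\<^sub>v u = l \<cdot>\<^sub>v u" and gw: "g *\<^sub>v w = l \<cdot>\<^sub>v w"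
  shows "g *\<^sub>v (a \<cdot>\<^sub>v u + b \<cdot>\<^sub>v w) = l \<cdot>\<^sub>v (a \<cdot>\<^sub>v u + b \<cdot>\<^sub>v w)"
  unfolding mat_lin[OF g u w] gu gw using u w by (intro eq_vecI) (auto simp: algebra_simps)

lemma quad_neg: assumes "(c::real) < 0" shows "\<exists>t. a + 2 * t * b + t^2 * c < 0"
proof -
  define t where "t = (\<bar>a\<bar> + 2 * \<bar>b\<bar> + 1) / (- c) + 1"
  have "(\<bar>a\<bar> + 2 * \<bar>b\<bar> + 1) / (- c) \<ge> 0" using assms by (intro divide_nonneg_pos) auto
  hence t1: "t \<ge> 1" unfolding t_def by simp
  have tc: "t * (- c) \<ge> \<bar>a\<bar> + 2 * \<bar>b\<bar> + 1" unfolding t_def using assms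
    by (simp add: field_simps)
  have "t^2 * c = - (t * (t * (-c)))" by (simp add: power2_eq_square)
  also have "\<dots> \<le> - (t * (\<bar>a\<bar> + 2 * \<bar>b\<bar> + 1))"
    using mult_left_mono[OF tc, of t] t1 by simp
  finally have "t^2 * c \<le> - (t * (\<bar>a\<bar> + 2 * \<bar>b\<bar> + 1))" .
  moreover have "a \<le> t * \<bar>a\<bar>"
  proof -
    have "1 * \<bar>a\<bar> \<le> t * \<bar>a\<bar>" using t1 by (intro mult_right_mono) auto
    then show ?thesis by simp
  qed
  moreover have "t * b \<le> t * \<bar>b\<bar>" using t1 by (intro mult_left_mono) auto
  moreover have "t * (\<bar>a\<bar> + 2 * \<bar>b\<bar> + 1) = t * \<bar>a\<bar> + 2 * (t * \<bar>b\<bar>) + t" by (simp add: algebra_simps)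
  ultimately have "a + 2 * (t * b) + t^2 * c < 0" using t1 by linarith
  then show ?thesis by (intro exI[of _ t]) (simp add: algebra_simps)
qed

lemma eig_unit: assumes g: "g \<in> Unk1 n" and y: "y \<in> carrier_vec (n+1)" and gy: "g *\<^sub>v y = \<mu> \<cdot>\<^sub>v y"
  and neg: "Re (hform n y y) < 0" shows "\<mu> * cnj \<mu> = 1"
proof -
  have "hform n y y = hform n (g *\<^sub>v y) (g *\<^sub>v y)" using Unk1_pres[OF g y y] by simp
  also have "\<dots> = \<mu> * cnj \<mu> * hform n y y" unfolding gy using y by (simp add: hf_smult1 hf_smult2)
  finally show ?thesis using neg by auto
qed


lemma vminus0: assumes "a \<in> carrier_vec m" "b \<in> carrier_vec m" "a - b = 0\<^sub>v m"
  shows "a = (b :: complex vec)"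
proof (rule eq_vecI)
  fix i assume i: "i < dim_vec b"
  have "(a - b) $ i = 0" using assms(3) i assms(2) by simp
  then show "a $ i = b $ i" using i assms(1,2) by simp
qed (use assms in auto)

lemma bwd:
  assumes T: "T \<in> Unk1 n" and uT: "unipotent n T" and S: "S \<in> Unk1 n" and eS: "elliptic n S"
    and inv: "pact T ` fixset n S \<subseteq> fixset n S"
  shows "S * T = T * S"
proof -
  note Tc = Unk1_carrier[OF T]
  note Sc = Unk1_carrier[OF S]
  from eS obtain p where p: "p \<in> chyp n" "pact S p = p" unfolding elliptic_def by auto
  then obtain x where x: "p = proj_pt x" "x \<in> carrier_vec (n+1)" "Re (hform n x x) < 0"
    unfolding chyp_def by auto
  obtain l where Sx: "S *\<^sub>v x = l \<cdot>\<^sub>v x" using fixed_eig[OF Sc x(2)] p x by auto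
  have ll: "l * cnj l = 1" using eig_unit[OF S x(2) Sx x(3)] .
  have l0: "l \<noteq> 0" using ll by auto
  define E where "E = {v \<in> carrier_vec (n+1). S *\<^sub>v v = l \<cdot>\<^sub>v v}"
  have xE: "x \<in> E" using x Sx unfolding E_def by auto
  have Ecomb: "\<And>u w a b. u \<in> E \<Longrightarrow> w \<in> E \<Longrightarrow> a \<cdot>\<^sub>v u + b \<cdot>\<^sub>v w \<in> E"
    unfolding E_def using eig_comb[OF Sc] by auto
  have Ec: "\<And>v. v \<in> E \<Longrightarrow> v \<in> carrier_vec (n+1)" unfolding E_def by auto
  have negE: "T *\<^sub>v v \<in> E" if v: "v \<in> E" "Re (hform n v v) < 0" for v
  proof -
    have vc: "v \<in> carrier_vec (n+1)" and Sv: "S *\<^sub>v v = l \<cdot>\<^sub>v v" using v unfolding E_def by auto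
    have "proj_pt v \<in> fixset n S" unfolding fixset_def chyp_cl_def chyp_def
      using vc v(2) eig_fixed[OF Sc vc Sv l0] by auto
    hence "pact T (proj_pt v) \<in> fixset n S" using inv by auto
    hence "pact S (proj_pt (T *\<^sub>v v)) = proj_pt (T *\<^sub>v v)" unfolding fixset_def pact_proj[OF Tc vc] by auto
    moreover have yc: "T *\<^sub>v v \<in> carrier_vec (n+1)" using Tc vc by simp
    ultimately obtain mu where Sy: "S *\<^sub>v (T *\<^sub>v v) = mu \<cdot>\<^sub>v (T *\<^sub>v v)" using fixed_eig[OF Sc] by blast
    have hy: "hform n (T *\<^sub>v v) (T *\<^sub>v v) = hform n v v" using Unk1_pres[OF T vc vc] .
    have "mu = l"
    proof (rule ccontr)
      assume ne: "mu \<noteq> l"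
      have k1: "mu * cnj l \<noteq> 1"
      proof
        assume "mu * cnj l = 1"
        hence "mu * (l * cnj l) = l" by (simp add: algebra_simps)
        hence "mu = l" using ll by simp
        with ne show False by simp
      qed
      have "hform n (T *\<^sub>v v) x = hform n (S *\<^sub>v (T *\<^sub>v v)) (S *\<^sub>v x)"
        using Unk1_pres[OF S yc x(2)] by simp
      also have "\<dots> = mu * cnj l * hform n (T *\<^sub>v v) x"
        unfolding Sy Sx using yc x(2) by (simp add: hf_smult1 hf_smult2)
      finally have "hform n (T *\<^sub>v v) x = 0" using k1 by (metis mult.commute mult_cancel_left1)
      then have "T *\<^sub>v v = 0\<^sub>v (n+1)" using defin[OF x(2) yc x(3)] hy v(2) by simp
      then show False using hy v(2) hf_zero1[of n "0\<^sub>v (n+1)"] by simp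
    qed
    then show ?thesis unfolding E_def using yc Sy by simp
  qed
  have TE: "T *\<^sub>v v \<in> E" if v: "v \<in> E" for v
  proof -
    have vc: "v \<in> carrier_vec (n+1)" using v unfolding E_def by auto
    obtain t where t: "Re (hform n v v) + 2 * t * Re (hform n v x) + t^2 * Re (hform n x x) < 0"
      using quad_neg[OF x(3)] by blast
    define w where "w = 1 \<cdot>\<^sub>v v + complex_of_real t \<cdot>\<^sub>v x"
    have wE: "w \<in> E" unfolding w_def using Ecomb[OF v xE] .
    have "hform n w w = hform n v v + of_real t * hform n x v + of_real t * hform n v x + of_real t * of_real t * hform n x x"
      unfolding w_def using vc x(2) by (simp add: hf_add1 hf_add2 hf_smult1 hf_smult2 algebra_simps)
    moreover have "Re (hform n x v) = Re (hform n v x)" using hf_cnj[of n x v] by simp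
    ultimately have "Re (hform n w w) < 0" using t by (simp add: power2_eq_square algebra_simps)
    hence TwE: "T *\<^sub>v w \<in> E" using negE[OF wE] by simp
    have TxE: "T *\<^sub>v x \<in> E" using negE[OF xE x(3)] .
    have "T *\<^sub>v v = 1 \<cdot>\<^sub>v (T *\<^sub>v w) + (- of_real t) \<cdot>\<^sub>v (T *\<^sub>v x)"
      unfolding w_def mat_lin[OF Tc vc x(2)] using Tc vc x(2) by (intro eq_vecI) auto
    then show ?thesis using Ecomb[OF TwE TxE, of 1 "- of_real t"] by simp
  qed
  define N where "N = T - 1\<^sub>m (n+1)"
  have Nc: "N \<in> carrier_mat (n+1) (n+1)" using Tc unfolding N_def by (simp add: minus_carrier_mat)
  have Nv: "\<And>v. v \<in> carrier_vec (n+1) \<Longrightarrow> N *\<^sub>v v = T *\<^sub>v v - v"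
    unfolding N_def using Tc by (simp add: minus_mult_distrib_mat_vec)
  have Nv': "\<And>v. v \<in> carrier_vec (n+1) \<Longrightarrow> T *\<^sub>v v = N *\<^sub>v v + v"
    using Nv Tc by (intro eq_vecI) auto
  have NE: "N *\<^sub>v v \<in> E" if v: "v \<in> E" for v
  proof -
    have vc: "v \<in> carrier_vec (n+1)" using v unfolding E_def by auto
    have "N *\<^sub>v v = 1 \<cdot>\<^sub>v (T *\<^sub>v v) + (-1) \<cdot>\<^sub>v v" unfolding Nv[OF vc] using Tc vc by (intro eq_vecI) auto
    then show ?thesis using Ecomb[OF TE[OF v] v, of 1 "-1"] by simp
  qed
  have Npow: "\<And>j v. v \<in> carrier_vec (n+1) \<Longrightarrow> (N ^\<^sub>m Suc j) *\<^sub>v v = (N ^\<^sub>m j) *\<^sub>v (N *\<^sub>v v)"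
  proof -
    fix j and v :: "complex vec" assume v: "v \<in> carrier_vec (n+1)"
    have "(N ^\<^sub>m Suc j) *\<^sub>v v = (N ^\<^sub>m j * N) *\<^sub>v v" by simp
    also have "\<dots> = (N ^\<^sub>m j) *\<^sub>v (N *\<^sub>v v)"
      by (rule assoc_mult_mat_vec[OF pow_carrier_mat[OF Nc] Nc v])
    finally show "(N ^\<^sub>m Suc j) *\<^sub>v v = (N ^\<^sub>m j) *\<^sub>v (N *\<^sub>v v)" .
  qed
  obtain k where k: "N ^\<^sub>m k = 0\<^sub>m (n+1) (n+1)" using uT unfolding unipotent_def N_def by auto
  have pre: "\<forall>e\<in>E. (N ^\<^sub>m j) *\<^sub>v e = 0\<^sub>v (n+1) \<longrightarrow> (\<exists>e'\<in>E. T *\<^sub>v e' = e)" for j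
  proof (induction j)
    case 0
    show ?case
    proof (intro ballI impI)
      fix e assume e: "e \<in> E" "(N ^\<^sub>m 0) *\<^sub>v e = 0\<^sub>v (n+1)"
      have "e = 0\<^sub>v (n+1)" using e Nc Ec[OF e(1)] by simp
      moreover have "T *\<^sub>v 0\<^sub>v (n+1) = 0\<^sub>v (n+1)" using Tc by (intro eq_vecI) auto
      ultimately show "\<exists>e'\<in>E. T *\<^sub>v e' = e" using e(1) by blast
    qed
  next
    case (Suc j)
    show ?case
    proof (intro ballI impI)
      fix e assume e: "e \<in> E" "(N ^\<^sub>m Suc j) *\<^sub>v e = 0\<^sub>v (n+1)"
      have ec: "e \<in> carrier_vec (n+1)" using Ec[OF e(1)] .
      have "(N ^\<^sub>m j) *\<^sub>v (N *\<^sub>v e) = 0\<^sub>v (n+1)" using e(2) Npow[OF ec] by simp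
      then obtain e2 where e2: "e2 \<in> E" "T *\<^sub>v e2 = N *\<^sub>v e" using Suc NE[OF e(1)] by blast
      have e2c: "e2 \<in> carrier_vec (n+1)" using Ec[OF e2(1)] .
      have "T *\<^sub>v (1 \<cdot>\<^sub>v e + (-1) \<cdot>\<^sub>v e2) = 1 \<cdot>\<^sub>v (T *\<^sub>v e) + (-1) \<cdot>\<^sub>v (T *\<^sub>v e2)"
        using mat_lin[OF Tc ec e2c] .
      also have "\<dots> = e" unfolding e2(2) Nv[OF ec] using Tc ec by (intro eq_vecI) auto
      finally show "\<exists>e'\<in>E. T *\<^sub>v e' = e" using Ecomb[OF e(1) e2(1)] by blast
    qed
  qed
  have surjE: "\<And>e. e \<in> E \<Longrightarrow> \<exists>e'\<in>E. T *\<^sub>v e' = e"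
  proof -
    fix e assume e: "e \<in> E"
    have "(N ^\<^sub>m k) *\<^sub>v e = 0\<^sub>v (n+1)" unfolding k using Ec[OF e] by (intro eq_vecI) auto
    then show "\<exists>e'\<in>E. T *\<^sub>v e' = e" using pre[of k] e by blast
  qed
  define V where "V = {w \<in> carrier_vec (n+1). \<forall>e\<in>E. hform n w e = 0}"
  have Vc: "\<And>w. w \<in> V \<Longrightarrow> w \<in> carrier_vec (n+1)" unfolding V_def by auto
  have Vx: "\<And>w. w \<in> V \<Longrightarrow> hform n w x = 0" unfolding V_def using xE by auto
  have TV: "T *\<^sub>v w \<in> V" if w: "w \<in> V" for w
  proof -
    have wc: "w \<in> carrier_vec (n+1)" using Vc[OF w] .
    have "hform n (T *\<^sub>v w) e = 0" if e: "e \<in> E" for e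
    proof -
      obtain e' where e': "e' \<in> E" "T *\<^sub>v e' = e" using surjE[OF e] by blast
      have "hform n (T *\<^sub>v w) e = hform n w e'" using Unk1_pres[OF T wc Ec[OF e'(1)]] e'(2) by simp
      then show ?thesis using w e'(1) unfolding V_def by auto
    qed
    then show ?thesis unfolding V_def using Tc wc by simp
  qed
  have NV: "N *\<^sub>v w \<in> V" if w: "w \<in> V" for w
  proof -
    have wc: "w \<in> carrier_vec (n+1)" using Vc[OF w] .
    have "hform n (N *\<^sub>v w) e = 0" if e: "e \<in> E" for e
      unfolding Nv[OF wc] using hf_minus1[of "T *\<^sub>v w" n w e] Tc wc TV[OF w] w e unfolding V_def by simp
    then show ?thesis unfolding V_def using Nc wc by simp
  qed
  have kill: "\<forall>w\<in>V. (N ^\<^sub>m j) *\<^sub>v w = 0\<^sub>v (n+1) \<longrightarrow> N *\<^sub>v w = 0\<^sub>v (n+1)" for j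
  proof (induction j)
    case 0
    show ?case
    proof (intro ballI impI)
      fix w assume w: "w \<in> V" "(N ^\<^sub>m 0) *\<^sub>v w = 0\<^sub>v (n+1)"
      have "w = 0\<^sub>v (n+1)" using w Nc Vc[OF w(1)] by simp
      then show "N *\<^sub>v w = 0\<^sub>v (n+1)" using Nc by (intro eq_vecI) auto
    qed
  next
    case (Suc j)
    show ?case
    proof (intro ballI impI)
      fix w assume w: "w \<in> V" "(N ^\<^sub>m Suc j) *\<^sub>v w = 0\<^sub>v (n+1)"
      have wc: "w \<in> carrier_vec (n+1)" using Vc[OF w(1)] .
      define v where "v = N *\<^sub>v w"
      have vV: "v \<in> V" unfolding v_def using NV[OF w(1)] .
      have vc: "v \<in> carrier_vec (n+1)" using Vc[OF vV] .
      have "(N ^\<^sub>m j) *\<^sub>v v = 0\<^sub>v (n+1)" unfolding v_def using w(2) Npow[OF wc] by simp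
      hence Nvv: "N *\<^sub>v v = 0\<^sub>v (n+1)" using Suc vV by blast
      have Tv: "T *\<^sub>v v = v" using Nv'[OF vc] Nvv vc by simp
      have Tw: "T *\<^sub>v w = w + v" using Nv'[OF wc] unfolding v_def using Nc wc by (simp add: comm_add_vec[of _ "n+1"])
      have "hform n w v = hform n (T *\<^sub>v w) (T *\<^sub>v v)" using Unk1_pres[OF T wc vc] by simp
      also have "\<dots> = hform n w v + hform n v v" unfolding Tw Tv using hf_add1[OF wc vc] by simp
      finally have "hform n v v = 0" by simp
      hence "v = 0\<^sub>v (n+1)" using defin[OF x(2) vc x(3) Vx[OF vV]] by simp
      then show "N *\<^sub>v w = 0\<^sub>v (n+1)" unfolding v_def .
    qed
  qed
  have NV0: "\<And>w. w \<in> V \<Longrightarrow> N *\<^sub>v w = 0\<^sub>v (n+1)"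
  proof -
    fix w assume w: "w \<in> V"
    have "(N ^\<^sub>m k) *\<^sub>v w = 0\<^sub>v (n+1)" unfolding k using Vc[OF w] by (intro eq_vecI) auto
    then show "N *\<^sub>v w = 0\<^sub>v (n+1)" using kill[of k] w by blast
  qed
  have TVid: "\<And>w. w \<in> V \<Longrightarrow> T *\<^sub>v w = w" using Nv' NV0 Vc by simp
  have Sform: "hform n (S *\<^sub>v w) e = l * hform n w e" if wc: "w \<in> carrier_vec (n+1)" and e: "e \<in> E" for w e
  proof -
    have ec: "e \<in> carrier_vec (n+1)" using Ec[OF e] .
    have "hform n w e = hform n (S *\<^sub>v w) (S *\<^sub>v e)" using Unk1_pres[OF S wc ec] by simp
    also have "\<dots> = cnj l * hform n (S *\<^sub>v w) e" using e ec unfolding E_def by (simp add: hf_smult2)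
    finally have "l * hform n w e = (l * cnj l) * hform n (S *\<^sub>v w) e" by (simp add: algebra_simps)
    then show ?thesis using ll by simp
  qed
  have SV: "S *\<^sub>v w - l \<cdot>\<^sub>v w \<in> V" if wc: "w \<in> carrier_vec (n+1)" for w
  proof -
    have "hform n (S *\<^sub>v w - l \<cdot>\<^sub>v w) e = 0" if e: "e \<in> E" for e
      using hf_minus1[of "S *\<^sub>v w" n "l \<cdot>\<^sub>v w" e] Sc wc Sform[OF wc e] hf_smult1[OF wc, of l e] by simp
    then show ?thesis unfolding V_def using Sc wc by simp
  qed
  have comm: "S *\<^sub>v (T *\<^sub>v w) = T *\<^sub>v (S *\<^sub>v w)" if wc: "w \<in> carrier_vec (n+1)" for w
  proof -
    define z where "z = N *\<^sub>v w"
    have zc: "z \<in> carrier_vec (n+1)" unfolding z_def using Nc wc by simp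
    have zV: "hform n z v = 0" if v: "v \<in> V" for v
    proof -
      have vc: "v \<in> carrier_vec (n+1)" using Vc[OF v] .
      have "hform n (T *\<^sub>v w) v = hform n w v" using Unk1_pres[OF T wc vc] TVid[OF v] by simp
      then show ?thesis unfolding z_def Nv[OF wc] using hf_minus1[of "T *\<^sub>v w" n w v] Tc wc by simp
    qed
    define y where "y = S *\<^sub>v z - l \<cdot>\<^sub>v z"
    have yV: "y \<in> V" unfolding y_def using SV[OF zc] .
    have yc: "y \<in> carrier_vec (n+1)" using Vc[OF yV] .
    have Szc: "S *\<^sub>v z \<in> carrier_vec (n+1)" using Sc zc by simp
    have lzc: "l \<cdot>\<^sub>v z \<in> carrier_vec (n+1)" using zc by simp
    have "hform n y z = cnj (hform n z y)" by (rule hf_cnj)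
    also have "\<dots> = 0" using zV[OF yV] by simp
    finally have "hform n (S *\<^sub>v z) z - l * hform n z z = 0"
      unfolding y_def using hf_minus1[OF Szc lzc, of z] hf_smult1[OF zc, of l z] by simp
    hence Szz: "hform n (S *\<^sub>v z) z = l * hform n z z" by simp
    have zz: "cnj (hform n z z) = hform n z z" using hf_cnj[of n z z] by simp
    have zSz: "hform n z (S *\<^sub>v z) = cnj l * hform n z z"
      using hf_cnj[of n z "S *\<^sub>v z"] Szz zz by simp
    have "hform n y y = hform n (S *\<^sub>v z) (S *\<^sub>v z) - hform n (S *\<^sub>v z) (l \<cdot>\<^sub>v z)
       - hform n (l \<cdot>\<^sub>v z) (S *\<^sub>v z) + hform n (l \<cdot>\<^sub>v z) (l \<cdot>\<^sub>v z)"
      unfolding y_def using hf_minus1[OF Szc lzc] hf_minus2[OF Szc lzc] by simp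
    also have "\<dots> = hform n z z - cnj l * (l * hform n z z) - l * (cnj l * hform n z z) + l * cnj l * hform n z z"
      using Unk1_pres[OF S zc zc] zc Szz zSz by (simp add: hf_smult1 hf_smult2 algebra_simps)
    also have "\<dots> = 0" using ll by (simp add: algebra_simps)
    finally have "hform n y y = 0" .
    hence "y = 0\<^sub>v (n+1)" using defin[OF x(2) yc x(3) Vx[OF yV]] by simp
    hence SN: "S *\<^sub>v z = l \<cdot>\<^sub>v z" unfolding y_def using vminus0[OF Szc lzc] by simp
    have Swc: "S *\<^sub>v w \<in> carrier_vec (n+1)" using Sc wc by simp
    have lwc: "l \<cdot>\<^sub>v w \<in> carrier_vec (n+1)" using wc by simp
    have "N *\<^sub>v (S *\<^sub>v w - l \<cdot>\<^sub>v w) = 0\<^sub>v (n+1)" using NV0[OF SV[OF wc]] .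
    hence "N *\<^sub>v (S *\<^sub>v w) - l \<cdot>\<^sub>v z = 0\<^sub>v (n+1)"
      unfolding z_def mult_minus_distrib_mat_vec[OF Nc Swc lwc] mult_mat_vec[OF Nc wc] .
    moreover have "N *\<^sub>v (S *\<^sub>v w) \<in> carrier_vec (n+1)" using Nc Swc by simp
    moreover have "l \<cdot>\<^sub>v z \<in> carrier_vec (n+1)" using zc by simp
    ultimately have NS: "N *\<^sub>v (S *\<^sub>v w) = l \<cdot>\<^sub>v z" using vminus0 by blast
    have "S *\<^sub>v (T *\<^sub>v w) = S *\<^sub>v z + S *\<^sub>v w" unfolding Nv'[OF wc] z_def
      using mult_add_distrib_mat_vec[OF Sc _ wc, of "N *\<^sub>v w"] Nc wc by simp
    also have "\<dots> = T *\<^sub>v (S *\<^sub>v w)" unfolding Nv'[OF Swc] NS SN ..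
    finally show ?thesis .
  qed
  show ?thesis
    by (rule mat_eq_vecI[of _ "n+1"]) (use Sc Tc comm in auto)
qed

theorem lemma3p5:
  fixes n :: nat and T S :: "complex mat"
  assumes "T \<in> Unk1 n" and "unipotent n T" and "parabolic n T"
    and "S \<in> Unk1 n" and "elliptic n S"
  shows "S * T = T * S \<longleftrightarrow>
           (pact T ` fixset n S = fixset n S \<and> pact S ` fixset n T = fixset n T)"
proof
  assume c: "S * T = T * S"
  show "pact T ` fixset n S = fixset n S \<and> pact S ` fixset n T = fixset n T"
    using fwd[OF assms(1) Unk1_carrier[OF assms(4)] c[symmetric]]
      fwd[OF assms(4) Unk1_carrier[OF assms(1)] c] by simp
next
  assume "pact T ` fixset n S = fixset n S \<and> pact S ` fixset n T = fixset n T"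
  then show "S * T = T * S" using bwd[OF assms(1,2,4,5)] by simp
qed

end
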